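(* Let $\psi$ and $\tilde\psi$ be twice differentiable, increasing, nonvanishing functions on $(0,\infty)$ (not necessarily complete Bernstein functions). For $\lambda>0$ define \[\vartheta_\lambda=\frac1\pi\int_0^1\frac{1}{1-\zeta^2}\log\frac{\psi_\lambda(\lambda^2/\zeta^2)}{\psi_\lambda(\lambda^2\zeta^2)}\,d\zeta,\] and define $\tilde\vartheta_\lambda$ in the same way using $\tilde\psi_\lambda$; assume these integrals converge and are finite. If $-\psi''(\xi)/\psi'(\xi)\le-\tilde\psi''(\xi)/\tilde\psi'(\xi)$ for all $\xi>0$, then $\vartheta_\lambda\le\tilde\vartheta_\lambda$ for all $\lambda>0$.
   Context: For $\lambda,\xi>0$, $\xi\ne\lambda^2$, $\psi_\lambda(\xi)=\dfrac{1-\xi/\lambda^2}{1-\psi(\xi)/\psi(\lambda^2)}$, extended continuously by $\psi_\lambda(\lambda^2)=\psi(\lambda^2)/(\lambda^2\psi'(\lambda^2))$; $\tilde\psi_\lambda$ is defined analogously from $\tilde\psi$. *)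

theory Defs
  imports "HOL-Analysis.Analysis"
begin

definition psi_lam :: "(real \<Rightarrow> real) \<Rightarrow> real \<Rightarrow> real \<Rightarrow> real" where
  "psi_lam \<psi> lam \<xi> =
     (if \<xi> = lam\<^sup>2 then \<psi> (lam\<^sup>2) / (lam\<^sup>2 * deriv \<psi> (lam\<^sup>2))
      else (1 - \<xi> / lam\<^sup>2) / (1 - \<psi> \<xi> / \<psi> (lam\<^sup>2)))"

definition theta_integrand :: "(real \<Rightarrow> real) \<Rightarrow> real \<Rightarrow> real \<Rightarrow> real" where
  "theta_integrand \<psi> lam \<zeta> =
     1 / (1 - \<zeta>\<^sup>2) * ln (psi_lam \<psi> lam (lam\<^sup>2 / \<zeta>\<^sup>2) / psi_lam \<psi> lam (lam\<^sup>2 * \<zeta>\<^sup>2))"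

text \<open>vartheta_lambda = (1/pi) * integral over (0,1) (Henstock-Kurzweil, which covers
  convergent improper integrals).\<close>
definition vartheta :: "(real \<Rightarrow> real) \<Rightarrow> real \<Rightarrow> real" where
  "vartheta \<psi> lam = 1 / pi * integral {0..1} (theta_integrand \<psi> lam)"

end

theory Submission
  imports Defs
begin

lemma deriv_pos_aux:
  fixes f :: "real \<Rightarrow> real"
  assumes inc: "strict_mono_on {0<..} f" and x: "x > 0"
    and D: "(f has_real_derivative l) (at x)" and nz: "l \<noteq> 0"
  shows "l > 0"
proof (rule ccontr)
  assume "\<not> l > 0"
  hence "l < 0" using nz by simp
  from DERIV_neg_dec_right[OF D this] obtain d where d: "d > 0" "\<forall>h>0. h < d \<longrightarrow> f x > f (x + h)" by blast
  have "f x > f (x + d/2)" using d by simp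
  moreover have "f x < f (x + d/2)" using inc x d(1) by (auto simp: strict_mono_on_def)
  ultimately show False by simp
qed

lemma ratio_mono:
  fixes f g f' g' f'' g'' :: "real \<Rightarrow> real"
  assumes df: "\<And>x. x>0 \<Longrightarrow> (f' has_real_derivative f'' x) (at x)"
    and dg: "\<And>x. x>0 \<Longrightarrow> (g' has_real_derivative g'' x) (at x)"
    and pg: "\<And>x. x>0 \<Longrightarrow> g' x > 0" and pf: "\<And>x. x>0 \<Longrightarrow> f' x > 0"
    and cmp: "\<And>x. x>0 \<Longrightarrow> f' x * g'' x \<le> f'' x * g' x"
    and c: "0 < c" "c \<le> d"
  shows "f' c / g' c \<le> f' d / g' d"
proof (rule DERIV_nonneg_imp_nondecreasing[OF c(2)])
  fix x assume x: "c \<le> x" "x \<le> d"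
  hence x0: "x > 0" using c by simp
  have "((\<lambda>x. f' x / g' x) has_real_derivative
      (f'' x * g' x - f' x * g'' x) / (g' x * g' x)) (at x)"
    using DERIV_divide[OF df[OF x0] dg[OF x0]] pg[OF x0] by simp
  moreover have "(f'' x * g' x - f' x * g'' x) / (g' x * g' x) \<ge> 0"
    using cmp[OF x0] pg[OF x0] by simp
  ultimately show "\<exists>y. ((\<lambda>x. f' x / g' x) has_real_derivative y) (at x) \<and> 0 \<le> y" by blast
qed

lemma cauchy_aux:
  fixes f g f' g' :: "real \<Rightarrow> real"
  assumes df: "\<And>x. x>0 \<Longrightarrow> (f has_real_derivative f' x) (at x)"
    and dg: "\<And>x. x>0 \<Longrightarrow> (g has_real_derivative g' x) (at x)"
    and ab: "0 < a" "a < b"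
  shows "\<exists>c. a < c \<and> c < b \<and> (f b - f a) * g' c = (g b - g a) * f' c"
proof (rule GMVT'[OF ab(2)])
  fix z assume "a \<le> z" "z \<le> b"
  hence z: "z > 0" using ab by simp
  show "isCont f z" using df[OF z] by (rule DERIV_isCont)
  show "isCont g z" using dg[OF z] by (rule DERIV_isCont)
next
  fix z assume "a < z" "z < b"
  hence z: "z > 0" using ab by simp
  show "(g has_real_derivative g' z) (at z)" using dg[OF z] .
  show "(f has_real_derivative f' z) (at z)" using df[OF z] .
qed


lemma slope_cmp:
  fixes f g :: "real \<Rightarrow> real"
  assumes df: "\<And>x. x>0 \<Longrightarrow> (f has_real_derivative deriv f x) (at x)"
    and dg: "\<And>x. x>0 \<Longrightarrow> (g has_real_derivative deriv g x) (at x)"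
    and df2: "\<And>x. x>0 \<Longrightarrow> (deriv f has_real_derivative deriv (deriv f) x) (at x)"
    and dg2: "\<And>x. x>0 \<Longrightarrow> (deriv g has_real_derivative deriv (deriv g) x) (at x)"
    and pg: "\<And>x. x>0 \<Longrightarrow> deriv g x > 0" and pf: "\<And>x. x>0 \<Longrightarrow> deriv f x > 0"
    and cmp: "\<And>x. x>0 \<Longrightarrow> deriv f x * deriv (deriv g) x \<le> deriv (deriv f) x * deriv g x"
    and incg: "strict_mono_on {0<..} g"
    and abt: "0 < a" "a < t" "t < b"
  shows "(f t - f a) * (g b - g t) \<le> (g t - g a) * (f b - f t)"
proof -
  obtain c where c: "a < c" "c < t" "(f t - f a) * deriv g c = (g t - g a) * deriv f c"
    using cauchy_aux[OF df dg abt(1) abt(2)] by blast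
  obtain d where d: "t < d" "d < b" "(f b - f t) * deriv g d = (g b - g t) * deriv f d"
    using cauchy_aux[OF df dg _ abt(3)] abt by force
  have r: "deriv f c / deriv g c \<le> deriv f d / deriv g d"
    by (rule ratio_mono[OF df2 dg2 pg pf cmp]) (use c d abt in auto)
  have gc: "deriv g c > 0" and gd: "deriv g d > 0" using pg c d abt by auto
  have G1: "g t - g a > 0" using incg abt by (auto simp: strict_mono_on_def)
  have G2: "g b - g t > 0" using incg abt by (auto simp: strict_mono_on_def)
  have e1: "f t - f a = (g t - g a) * (deriv f c / deriv g c)"
    using c(3) gc by (simp add: field_simps)
  have e2: "f b - f t = (g b - g t) * (deriv f d / deriv g d)"
    using d(3) gd by (simp add: field_simps)
  have m: "(deriv f c / deriv g c) * ((g t - g a) * (g b - g t))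
      \<le> (deriv f d / deriv g d) * ((g t - g a) * (g b - g t))"
    by (rule mult_right_mono[OF r]) (use G1 G2 in simp)
  have L: "(f t - f a) * (g b - g t) = (deriv f c / deriv g c) * ((g t - g a) * (g b - g t))"
    by (simp add: e1)
  have R: "(g t - g a) * (f b - f t) = (deriv f d / deriv g d) * ((g t - g a) * (g b - g t))"
    by (simp add: e2)
  show ?thesis using m unfolding L R .
qed

lemma psi_ratio:
  fixes f :: "real \<Rightarrow> real"
  assumes inc: "strict_mono_on {0<..} f" and abt: "0 < a" "a < t" "t < b" and t: "t = lam\<^sup>2"
    and nz: "f t \<noteq> 0"
  shows "psi_lam f lam b / psi_lam f lam a = ((f t - f a) * (b - t)) / ((f b - f t) * (t - a))"
proof -
  have F1: "f t - f a > 0" using inc abt by (auto simp: strict_mono_on_def)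
  have F2: "f b - f t > 0" using inc abt by (auto simp: strict_mono_on_def)
  have t0: "t \<noteq> 0" "t - a \<noteq> 0" "f t - f b \<noteq> 0" "f t - f a \<noteq> 0" using abt F1 F2 by auto
  have "psi_lam f lam b / psi_lam f lam a = ((1 - b/t)/(1 - f b/f t)) / ((1 - a/t)/(1 - f a/f t))"
    using abt t unfolding psi_lam_def by auto
  also have "\<dots> = ((f t - f a) * (b - t)) / ((f b - f t) * (t - a))"
    using t0 nz by (simp add: divide_simps) (simp add: algebra_simps)
  finally show ?thesis .
qed

theorem proposition4p1:
  fixes \<psi> \<psi>t :: "real \<Rightarrow> real"
  assumes d1: "\<And>x. x > 0 \<Longrightarrow> \<psi> differentiable (at x)"
    and d2: "\<And>x. x > 0 \<Longrightarrow> deriv \<psi> differentiable (at x)"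
    and dt1: "\<And>x. x > 0 \<Longrightarrow> \<psi>t differentiable (at x)"
    and dt2: "\<And>x. x > 0 \<Longrightarrow> deriv \<psi>t differentiable (at x)"
    and inc: "strict_mono_on {0<..} \<psi>"
    and inct: "strict_mono_on {0<..} \<psi>t"
    and nz: "\<And>x. x > 0 \<Longrightarrow> \<psi> x \<noteq> 0"
    and nzt: "\<And>x. x > 0 \<Longrightarrow> \<psi>t x \<noteq> 0"
    and dnz: "\<And>x. x > 0 \<Longrightarrow> deriv \<psi> x \<noteq> 0"
    and dnzt: "\<And>x. x > 0 \<Longrightarrow> deriv \<psi>t x \<noteq> 0"
    and conv: "\<And>lam. lam > 0 \<Longrightarrow> theta_integrand \<psi> lam integrable_on {0..1}"
    and convt: "\<And>lam. lam > 0 \<Longrightarrow> theta_integrand \<psi>t lam integrable_on {0..1}"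
    and cmp: "\<And>\<xi>. \<xi> > 0 \<Longrightarrow>
       - deriv (deriv \<psi>) \<xi> / deriv \<psi> \<xi> \<le> - deriv (deriv \<psi>t) \<xi> / deriv \<psi>t \<xi>"
  shows "\<forall>lam>0. vartheta \<psi> lam \<le> vartheta \<psi>t lam"
proof (intro allI impI)
  fix lam :: real assume lam: "lam > 0"
  have D1: "\<And>x. x>0 \<Longrightarrow> (\<psi> has_real_derivative deriv \<psi> x) (at x)"
    using d1 DERIV_deriv_iff_real_differentiable by blast
  have D2: "\<And>x. x>0 \<Longrightarrow> (deriv \<psi> has_real_derivative deriv (deriv \<psi>) x) (at x)"
    using d2 DERIV_deriv_iff_real_differentiable by blast
  have Dt1: "\<And>x. x>0 \<Longrightarrow> (\<psi>t has_real_derivative deriv \<psi>t x) (at x)"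
    using dt1 DERIV_deriv_iff_real_differentiable by blast
  have Dt2: "\<And>x. x>0 \<Longrightarrow> (deriv \<psi>t has_real_derivative deriv (deriv \<psi>t) x) (at x)"
    using dt2 DERIV_deriv_iff_real_differentiable by blast
  have P: "\<And>x. x>0 \<Longrightarrow> deriv \<psi> x > 0"
    using deriv_pos_aux[OF inc _ D1 dnz] by blast
  have Pt: "\<And>x. x>0 \<Longrightarrow> deriv \<psi>t x > 0"
    using deriv_pos_aux[OF inct _ Dt1 dnzt] by blast
  have C: "deriv \<psi> x * deriv (deriv \<psi>t) x \<le> deriv (deriv \<psi>) x * deriv \<psi>t x" if x: "x > 0" for x
  proof -
    have p: "deriv \<psi> x > 0" "deriv \<psi>t x > 0" using P Pt x by auto
    have "- deriv (deriv \<psi>) x / deriv \<psi> x \<le> - deriv (deriv \<psi>t) x / deriv \<psi>t x" using cmp x by blast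
    thus ?thesis using p by (simp add: field_simps)
  qed
  define t where "t = lam\<^sup>2"
  have t0: "t > 0" using lam by (simp add: t_def)
  have pw: "theta_integrand \<psi> lam z \<le> theta_integrand \<psi>t lam z" if z: "z \<in> {0..1}" for z
  proof (cases "z = 0 \<or> z = 1")
    case True
    thus ?thesis unfolding theta_integrand_def by auto
  next
    case False
    hence z01: "0 < z" "z < 1" using z by auto
    define a where "a = t * z\<^sup>2"
    define b where "b = t / z\<^sup>2"
    have z2: "0 < z\<^sup>2" "z\<^sup>2 < 1" using z01 by (auto simp: power_less_one_iff)
    have abt: "0 < a" "a < t" "t < b" unfolding a_def b_def using t0 z2 by (auto simp: field_simps)
    have ta: "lam\<^sup>2 / z\<^sup>2 = b" "lam\<^sup>2 * z\<^sup>2 = a" by (auto simp: a_def b_def t_def)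
    have F1: "\<psi> t - \<psi> a > 0" "\<psi> b - \<psi> t > 0" using inc abt by (auto simp: strict_mono_on_def)
    have G1: "\<psi>t t - \<psi>t a > 0" "\<psi>t b - \<psi>t t > 0" using inct abt by (auto simp: strict_mono_on_def)
    have s: "(\<psi> t - \<psi> a) * (\<psi>t b - \<psi>t t) \<le> (\<psi>t t - \<psi>t a) * (\<psi> b - \<psi> t)"
      by (rule slope_cmp[OF D1 Dt1 D2 Dt2 Pt P C inct abt])
    have k: "(b - t) / (t - a) > 0" using abt by simp
    have "(\<psi> t - \<psi> a) / (\<psi> b - \<psi> t) \<le> (\<psi>t t - \<psi>t a) / (\<psi>t b - \<psi>t t)"
      using s F1 G1 by (simp add: divide_simps)
    hence "(\<psi> t - \<psi> a) / (\<psi> b - \<psi> t) * ((b - t) / (t - a))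
        \<le> (\<psi>t t - \<psi>t a) / (\<psi>t b - \<psi>t t) * ((b - t) / (t - a))"
      using k by (rule mult_right_mono[OF _ less_imp_le])
    hence le: "((\<psi> t - \<psi> a) * (b - t)) / ((\<psi> b - \<psi> t) * (t - a))
        \<le> ((\<psi>t t - \<psi>t a) * (b - t)) / ((\<psi>t b - \<psi>t t) * (t - a))"
      by simp
    have pos: "((\<psi> t - \<psi> a) * (b - t)) / ((\<psi> b - \<psi> t) * (t - a)) > 0"
      using F1 abt by simp
    have r1: "psi_lam \<psi> lam b / psi_lam \<psi> lam a = ((\<psi> t - \<psi> a) * (b - t)) / ((\<psi> b - \<psi> t) * (t - a))"
      by (rule psi_ratio[OF inc abt t_def nz[OF t0]])
    have r2: "psi_lam \<psi>t lam b / psi_lam \<psi>t lam a = ((\<psi>t t - \<psi>t a) * (b - t)) / ((\<psi>t b - \<psi>t t) * (t - a))"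
      by (rule psi_ratio[OF inct abt t_def nzt[OF t0]])
    have lnle: "ln (psi_lam \<psi> lam b / psi_lam \<psi> lam a) \<le> ln (psi_lam \<psi>t lam b / psi_lam \<psi>t lam a)"
      unfolding r1 r2 using le pos by simp
    have q: "1 / (1 - z\<^sup>2) > 0" using z2 by simp
    show ?thesis unfolding theta_integrand_def ta
      using mult_left_mono[OF lnle less_imp_le[OF q]] by simp
  qed
  have "integral {0..1} (theta_integrand \<psi> lam) \<le> integral {0..1} (theta_integrand \<psi>t lam)"
    by (rule integral_le[OF conv[OF lam] convt[OF lam] pw])
  thus "vartheta \<psi> lam \<le> vartheta \<psi>t lam" unfolding vartheta_def by (simp add: divide_right_mono)
qed

end
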